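(* Fix a constant $c>0$ and an interval $I\subset\mathbb{R}$ of finite Lebesgue measure, and write $B^h_k:=B^h_k(\chi_I)$. Let $n\geq 3$ and define $C_1(n):=[B^0_n,B^n_0]$ and, for $k\geq 2$, $C_k(n):=[B^0_n,C_{k-1}(n)]$. Then \[ C_3(n)=\beta(n)\,B^0_{2n}+N(n), \] where \[ \beta(n):=\sum_{L_1=1}^{n-1}\sum_{L_2=1}^{n-L_1} b_{L_1}(n,n)\,b_{L_2}(n,n-L_1)\,b_{n-(L_1+L_2)}\big(n,n-(L_1+L_2)\big)\in\mathbb{R}\setminus\{0\}, \] \[ N(n):=\sum_{L_1=1}^{n-1}\sum_{L_2=1}^{n-L_1}\sum_{L_3=1}^{n-(L_1+L_2)} b_{L_1}(n,n)\,b_{L_2}(n,n-L_1)\,b_{L_3}\big(n,n-(L_1+L_2)\big)\,B^{\,n-(L_1+L_2+L_3)}_{\,3n-(L_1+L_2+L_3)}, \] the triple sum running only over those $(L_1,L_2,L_3)$ with $L_1+L_2+L_3\neq n$. Consequently \[ N(n)^*=\sum_{L_1,L_2,L_3}(\text{same coefficients})\,B_{\,n-(L_1+L_2+L_3)}^{\,3n-(L_1+L_2+L_3)}. \]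
   Context: The RPQWN (renormalized powers of quantum white noise) algebra is the $*$-Lie algebra generated by symbols $B^h_k(f)$, $h,k\in\{0,1,2,\dots\}$, $f$ a test function, with involution $(B^h_k(f))^*=B^k_h(\bar f)$, linear in $f$, and commutation relations \[ [B^N_K(\bar g),B^n_k(f)]=\sum_{L=1}^{K\wedge n} b_L(K,n)\,B^{N+n-L}_{K+k-L}(\bar g f)-\sum_{L=1}^{k\wedge N} b_L(k,N)\,B^{N+n-L}_{K+k-L}(\bar g f), \] where $b_x(y,z):=\epsilon_{y,0}\,\epsilon_{z,0}\binom{y}{x}z^{(x)}c^{x-1}$, $\epsilon_{n,k}:=1-\delta_{n,k}$ ($\delta$ the Kronecker delta), $z^{(x)}:=z(z-1)\cdots(z-x+1)$ with $z^{(0)}=1$, and an empty sum is $0$. These relations arise from the white noise relations $[b_t,b_s^\dagger]=\delta(t-s)$ with the renormalization $\delta^l(t)=c^{l-1}\delta(t)$ for $l\ge2$. $\chi_I$ denotes the indicator of $I$, so $\chi_I^2=\chi_I$. *)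

theory Defs
  imports "HOL-Analysis.Analysis"
begin

definition eps :: "nat \<Rightarrow> nat \<Rightarrow> real" where
  "eps n k = (if n = k then 0 else 1)"

definition falling :: "nat \<Rightarrow> nat \<Rightarrow> real" where
  "falling z x = (\<Prod>i<x. real z - real i)"

definition bcoef :: "real \<Rightarrow> nat \<Rightarrow> nat \<Rightarrow> nat \<Rightarrow> real" where
  "bcoef c x y z = eps y 0 * eps z 0 * real (y choose x) * falling z x * c powi (int x - 1)"

definition star_lie_algebra ::
  "(complex \<Rightarrow> 'a::ab_group_add \<Rightarrow> 'a) \<Rightarrow> ('a \<Rightarrow> 'a \<Rightarrow> 'a) \<Rightarrow> ('a \<Rightarrow> 'a) \<Rightarrow> bool" where
  "star_lie_algebra sc br st \<longleftrightarrow> vector_space sc \<and>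
     (\<forall>a x y z. br (sc a x + y) z = sc a (br x z) + br y z) \<and>
     (\<forall>a x y z. br z (sc a x + y) = sc a (br z x) + br z y) \<and>
     (\<forall>x y. br x y = - br y x) \<and>
     (\<forall>x y z. br x (br y z) + br y (br z x) + br z (br x y) = 0) \<and>
     (\<forall>x. st (st x) = x) \<and>
     (\<forall>a x y. st (sc a x + y) = sc (cnj a) (st x) + st y) \<and>
     (\<forall>x y. st (br x y) = br (st y) (st x))"

definition rpqwn ::
  "real \<Rightarrow> (real \<Rightarrow> complex) set \<Rightarrow> (complex \<Rightarrow> 'a::ab_group_add \<Rightarrow> 'a) \<Rightarrow> ('a \<Rightarrow> 'a \<Rightarrow> 'a) \<Rightarrow> ('a \<Rightarrow> 'a)
    \<Rightarrow> (nat \<Rightarrow> nat \<Rightarrow> (real \<Rightarrow> complex) \<Rightarrow> 'a) \<Rightarrow> bool" where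
  "rpqwn c T sc br st B \<longleftrightarrow>
     star_lie_algebra sc br st \<and>
     (\<forall>f\<in>T. \<forall>g\<in>T. \<forall>a. (\<lambda>t. a * f t + g t) \<in> T) \<and>
     (\<forall>f\<in>T. \<forall>g\<in>T. (\<lambda>t. f t * g t) \<in> T) \<and>
     (\<forall>f\<in>T. (\<lambda>t. cnj (f t)) \<in> T) \<and>
     (\<forall>h k a. \<forall>f\<in>T. \<forall>g\<in>T. B h k (\<lambda>t. a * f t + g t) = sc a (B h k f) + B h k g) \<and>
     (\<forall>h k. \<forall>f\<in>T. st (B h k f) = B k h (\<lambda>t. cnj (f t))) \<and>
     (\<forall>N K n k. \<forall>f\<in>T. \<forall>g\<in>T.
        br (B N K (\<lambda>t. cnj (g t))) (B n k f) =
          (\<Sum>L\<in>{1..min K n}. sc (complex_of_real (bcoef c L K n)) (B (N + n - L) (K + k - L) (\<lambda>t. cnj (g t) * f t)))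
        - (\<Sum>L\<in>{1..min k N}. sc (complex_of_real (bcoef c L k N)) (B (N + n - L) (K + k - L) (\<lambda>t. cnj (g t) * f t))))"

end

theory Submission
  imports Defs
begin

lemma falling_pos: "x \<le> z \<Longrightarrow> falling z x > 0"
  unfolding falling_def by (rule prod_pos) auto

lemma falling_nonneg: "falling z x \<ge> 0"
proof (cases "x \<le> z")
  case True then show ?thesis using falling_pos[of x z] by simp
next
  case False
  have "(\<Prod>i<x. real z - real i) = 0"
    using False by (intro prod_zero) (auto intro!: bexI[of _ z])
  then show ?thesis unfolding falling_def by (metis order_refl)
qed

lemma bcoef_nonneg: "c > 0 \<Longrightarrow> bcoef c x y z \<ge> 0"
  unfolding bcoef_def eps_def using falling_nonneg[of z x]
  by (intro mult_nonneg_nonneg) auto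

lemma bcoef_pos: "c > 0 \<Longrightarrow> y \<noteq> 0 \<Longrightarrow> z \<noteq> 0 \<Longrightarrow> x \<le> y \<Longrightarrow> x \<le> z \<Longrightarrow> bcoef c x y z > 0"
  unfolding bcoef_def eps_def using falling_pos[of x z]
  by (intro mult_pos_pos) auto

lemma bcoef_0: "bcoef c x y 0 = 0"
  unfolding bcoef_def eps_def by simp

theorem lemma1:
  fixes c :: real and I :: "real set" and T :: "(real \<Rightarrow> complex) set"
    and sc :: "complex \<Rightarrow> 'a::ab_group_add \<Rightarrow> 'a"
    and br :: "'a \<Rightarrow> 'a \<Rightarrow> 'a" and st :: "'a \<Rightarrow> 'a"
    and B :: "nat \<Rightarrow> nat \<Rightarrow> (real \<Rightarrow> complex) \<Rightarrow> 'a" and n :: nat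
  assumes "c > 0"
    and "is_interval I" and "emeasure lborel I < \<infinity>"
    and "rpqwn c T sc br st B"
    and "(indicator I :: real \<Rightarrow> complex) \<in> T"
    and "n \<ge> 3"
  shows
   "let Bc = (\<lambda>h k. B h k (indicator I));
        C3 = br (Bc 0 n) (br (Bc 0 n) (br (Bc 0 n) (Bc n 0)));
        \<beta> = (\<Sum>L1\<in>{1..n-1}. \<Sum>L2\<in>{1..n-L1}.
               bcoef c L1 n n * bcoef c L2 n (n - L1) * bcoef c (n - (L1 + L2)) n (n - (L1 + L2)));
        N = (\<Sum>L1\<in>{1..n-1}. \<Sum>L2\<in>{1..n-L1}. \<Sum>L3\<in>{L3\<in>{1..n-(L1+L2)}. L1 + L2 + L3 \<noteq> n}.
               sc (complex_of_real (bcoef c L1 n n * bcoef c L2 n (n - L1) * bcoef c L3 n (n - (L1 + L2))))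
                 (Bc (n - (L1 + L2 + L3)) (3 * n - (L1 + L2 + L3))))
    in C3 = sc (complex_of_real \<beta>) (Bc 0 (2 * n)) + N \<and> \<beta> \<noteq> 0 \<and>
       st N = (\<Sum>L1\<in>{1..n-1}. \<Sum>L2\<in>{1..n-L1}. \<Sum>L3\<in>{L3\<in>{1..n-(L1+L2)}. L1 + L2 + L3 \<noteq> n}.
               sc (complex_of_real (bcoef c L1 n n * bcoef c L2 n (n - L1) * bcoef c L3 n (n - (L1 + L2))))
                 (Bc (3 * n - (L1 + L2 + L3)) (n - (L1 + L2 + L3))))"
proof -
  note R = assms(4)[unfolded rpqwn_def star_lie_algebra_def]
  have vs: "vector_space sc" using R by (elim conjE) fast
  interpret V: vector_space sc by (rule vs)
  have brl: "\<And>a x y z. br z (sc a x + y) = sc a (br z x) + br z y" using R by (elim conjE) fast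
  have stl: "\<And>a x y. st (sc a x + y) = sc (cnj a) (st x) + st y" using R by (elim conjE) fast
  have stB: "\<And>h k f. f \<in> T \<Longrightarrow> st (B h k f) = B k h (\<lambda>t. cnj (f t))" using R by (elim conjE) fast
  have brB: "\<And>N K n k f g. f\<in>T \<Longrightarrow> g\<in>T \<Longrightarrow> br (B N K (\<lambda>t. cnj (g t))) (B n k f) =
          (\<Sum>L\<in>{1..min K n}. sc (complex_of_real (bcoef c L K n)) (B (N + n - L) (K + k - L) (\<lambda>t. cnj (g t) * f t)))
        - (\<Sum>L\<in>{1..min k N}. sc (complex_of_real (bcoef c L k N)) (B (N + n - L) (K + k - L) (\<lambda>t. cnj (g t) * f t)))"
    using R by (elim conjE) fast
  define chi where "chi = (indicator I :: real \<Rightarrow> complex)"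
  have chiT: "chi \<in> T" using assms(5) by (simp add: chi_def)
  have cnjchi: "(\<lambda>t. cnj (chi t)) = chi" by (auto simp: chi_def indicator_def)
  have sqchi: "(\<lambda>t. cnj (chi t) * chi t) = chi" by (auto simp: chi_def indicator_def)
  have br0: "br z 0 = 0" for z
    using brl[of z 1 0 0] by simp
  have bradd: "br z (x + y) = br z x + br z y" for z x y
    using brl[of z 1 x y] by simp
  have brsc: "br z (sc a x) = sc a (br z x)" for z a x
    using brl[of z a x 0] br0 by simp
  have brsum: "br z (sum f A) = (\<Sum>i\<in>A. br z (f i))" for z f and A :: "'b set"
    by (induction A rule: infinite_finite_induct) (simp_all add: br0 bradd)
  have st0: "st 0 = 0"
    using stl[of 1 0 0] by simp
  have stadd: "st (x + y) = st x + st y" for x y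
    using stl[of 1 x y] by simp
  have stsc: "st (sc (complex_of_real a) x) = sc (complex_of_real a) (st x)" for a x
    using stl[of "complex_of_real a" x 0] st0 by simp
  have stsum: "st (sum f A) = (\<Sum>i\<in>A. st (f i))" for f and A :: "'b set"
    by (induction A rule: infinite_finite_induct) (simp_all add: st0 stadd)
  have stBc: "st (B h k chi) = B k h chi" for h k
    using stB[OF chiT, of h k] cnjchi by simp
  have brBc: "br (B 0 K chi) (B h k chi) = (\<Sum>L\<in>{1..min K h}. sc (complex_of_real (bcoef c L K h)) (B (h - L) (K + k - L) chi))" for K h k
    using brB[OF chiT chiT, of 0 K h k] by (simp add: cnjchi sqchi)
  have mn: "min n (n - i) = n - i" for i by simp
  have C1: "br (B 0 n chi) (B n 0 chi) = (\<Sum>L1\<in>{1..n}. sc (complex_of_real (bcoef c L1 n n)) (B (n - L1) (n - L1) chi))"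
    using brBc[of n n 0] by simp
  have C2: "br (B 0 n chi) (br (B 0 n chi) (B n 0 chi)) = (\<Sum>L1\<in>{1..n}. sc (complex_of_real (bcoef c L1 n n))
     (\<Sum>L2\<in>{1..n-L1}. sc (complex_of_real (bcoef c L2 n (n-L1))) (B (n-L1-L2) (n + (n-L1) - L2) chi)))"
    unfolding C1 brsum brsc by (simp add: brBc mn)
  have C3: "br (B 0 n chi) (br (B 0 n chi) (br (B 0 n chi) (B n 0 chi))) = (\<Sum>L1\<in>{1..n}. sc (complex_of_real (bcoef c L1 n n))
     (\<Sum>L2\<in>{1..n-L1}. sc (complex_of_real (bcoef c L2 n (n-L1)))
       (\<Sum>L3\<in>{1..n-L1-L2}. sc (complex_of_real (bcoef c L3 n (n-L1-L2))) (B (n-L1-L2-L3) (n + (n + (n-L1) - L2) - L3) chi))))"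
    unfolding C2 brsum brsc by (simp add: brBc mn)
  have inner: "sc (complex_of_real b1) (sc (complex_of_real b2)
       (\<Sum>L3\<in>{1..n-L1-L2}. sc (complex_of_real (bcoef c L3 n (n-L1-L2))) (B (n-L1-L2-L3) (n + (n + (n-L1) - L2) - L3) chi)))
     = sc (complex_of_real (b1 * b2 * bcoef c (n - (L1 + L2)) n (n - (L1 + L2)))) (B 0 (2 * n) chi)
      + (\<Sum>L3\<in>{L3\<in>{1..n-(L1+L2)}. L1 + L2 + L3 \<noteq> n}.
               sc (complex_of_real (b1 * b2 * bcoef c L3 n (n - (L1 + L2))))
                 (B (n - (L1 + L2 + L3)) (3 * n - (L1 + L2 + L3)) chi))"
    if le: "L1 + L2 \<le> n" for L1 L2 b1 b2
  proof (cases "n - (L1 + L2) = 0")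
    case True
    then have e: "{L3\<in>{1..n-(L1+L2)}. L1 + L2 + L3 \<noteq> n} = {}" by auto
    show ?thesis using True unfolding e by (simp add: bcoef_0)
  next
    case False
    define p where "p = n - (L1 + L2)"
    define F where "F = {L3\<in>{1..n-(L1+L2)}. L1 + L2 + L3 \<noteq> n}"
    have ins: "{1..p} = insert p F" using False le unfolding p_def F_def by auto
    have pF: "p \<notin> F" "finite F" using le unfolding p_def F_def by auto
    have e1: "n-L1-L2-p = 0" "n + (n + (n-L1) - L2) - p = 2 * n" "n - L1 - L2 = p" using le unfolding p_def by auto
    have e2: "p-L3 = n - (L1 + L2 + L3) \<and> n + (n + (n-L1) - L2) - L3 = 3 * n - (L1 + L2 + L3)" if "L3 \<in> F" for L3
      using that le unfolding F_def p_def by auto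
    have s1: "(\<Sum>L3\<in>{1..n-L1-L2}. sc (complex_of_real (bcoef c L3 n (n-L1-L2))) (B (n-L1-L2-L3) (n + (n + (n-L1) - L2) - L3) chi))
      = sc (complex_of_real (bcoef c p n p)) (B 0 (2 * n) chi) + (\<Sum>L3\<in>F. sc (complex_of_real (bcoef c L3 n p)) (B (n - (L1 + L2 + L3)) (3 * n - (L1 + L2 + L3)) chi))"
      unfolding e1(3) ins sum.insert[OF pF(2) pF(1)]
    proof (rule arg_cong2[where f="(+)"])
      show "sc (complex_of_real (bcoef c p n p)) (B (p - p) (n + (n + (n - L1) - L2) - p) chi) = sc (complex_of_real (bcoef c p n p)) (B 0 (2 * n) chi)"
        using e1(2) by simp
      show "(\<Sum>L3\<in>F. sc (complex_of_real (bcoef c L3 n p)) (B (p - L3) (n + (n + (n - L1) - L2) - L3) chi)) = (\<Sum>L3\<in>F. sc (complex_of_real (bcoef c L3 n p)) (B (n - (L1 + L2 + L3)) (3 * n - (L1 + L2 + L3)) chi))"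
        by (rule sum.cong) (use e2 in auto)
    qed
    have Feq: "F = {L3. Suc 0 \<le> L3 \<and> L3 \<le> p \<and> L1 + L2 + L3 \<noteq> n}" by (auto simp: F_def p_def)
    show ?thesis
      unfolding F_def[symmetric] s1 p_def[symmetric]
      by (simp add: V.scale_sum_right V.scale_right_distrib mult.assoc, rule sum.cong, auto simp: Feq)
  qed
  define X where "X = B 0 (2 * n) chi"
  have P1: "br (B 0 n chi) (br (B 0 n chi) (br (B 0 n chi) (B n 0 chi))) =
     sc (complex_of_real (\<Sum>L1\<in>{1..n-1}. \<Sum>L2\<in>{1..n-L1}.
               bcoef c L1 n n * bcoef c L2 n (n - L1) * bcoef c (n - (L1 + L2)) n (n - (L1 + L2)))) X +
     (\<Sum>L1\<in>{1..n-1}. \<Sum>L2\<in>{1..n-L1}. \<Sum>L3\<in>{L3\<in>{1..n-(L1+L2)}. L1 + L2 + L3 \<noteq> n}.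
               sc (complex_of_real (bcoef c L1 n n * bcoef c L2 n (n - L1) * bcoef c L3 n (n - (L1 + L2))))
                 (B (n - (L1 + L2 + L3)) (3 * n - (L1 + L2 + L3)) chi))"
  proof -
    have ins: "{1..n} = insert n {1..n-1}" using assms(6) by auto
    have "br (B 0 n chi) (br (B 0 n chi) (br (B 0 n chi) (B n 0 chi))) = (\<Sum>L1\<in>{1..n-1}. sc (complex_of_real (bcoef c L1 n n))
     (\<Sum>L2\<in>{1..n-L1}. sc (complex_of_real (bcoef c L2 n (n-L1)))
       (\<Sum>L3\<in>{1..n-L1-L2}. sc (complex_of_real (bcoef c L3 n (n-L1-L2))) (B (n-L1-L2-L3) (n + (n + (n-L1) - L2) - L3) chi))))"
      unfolding C3 ins using assms(6) by (subst sum.insert) auto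
    also have "\<dots> = (\<Sum>L1\<in>{1..n-1}. \<Sum>L2\<in>{1..n-L1}. 
        sc (complex_of_real (bcoef c L1 n n * bcoef c L2 n (n - L1) * bcoef c (n - (L1 + L2)) n (n - (L1 + L2)))) X
      + (\<Sum>L3\<in>{L3\<in>{1..n-(L1+L2)}. L1 + L2 + L3 \<noteq> n}.
               sc (complex_of_real (bcoef c L1 n n * bcoef c L2 n (n - L1) * bcoef c L3 n (n - (L1 + L2))))
                 (B (n - (L1 + L2 + L3)) (3 * n - (L1 + L2 + L3)) chi)))"
    proof (rule sum.cong[OF refl])
      fix L1 assume L1: "L1 \<in> {1..n-1}"
      show "sc (complex_of_real (bcoef c L1 n n))
     (\<Sum>L2\<in>{1..n-L1}. sc (complex_of_real (bcoef c L2 n (n-L1)))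
       (\<Sum>L3\<in>{1..n-L1-L2}. sc (complex_of_real (bcoef c L3 n (n-L1-L2))) (B (n-L1-L2-L3) (n + (n + (n-L1) - L2) - L3) chi)))
       = (\<Sum>L2\<in>{1..n-L1}. 
        sc (complex_of_real (bcoef c L1 n n * bcoef c L2 n (n - L1) * bcoef c (n - (L1 + L2)) n (n - (L1 + L2)))) X
      + (\<Sum>L3\<in>{L3\<in>{1..n-(L1+L2)}. L1 + L2 + L3 \<noteq> n}.
               sc (complex_of_real (bcoef c L1 n n * bcoef c L2 n (n - L1) * bcoef c L3 n (n - (L1 + L2))))
                 (B (n - (L1 + L2 + L3)) (3 * n - (L1 + L2 + L3)) chi)))"
        unfolding V.scale_sum_right[of "complex_of_real (bcoef c L1 n n)"] X_def
        by (rule sum.cong[OF refl], rule inner) auto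
    qed
    also have "\<dots> = sc (complex_of_real (\<Sum>L1\<in>{1..n-1}. \<Sum>L2\<in>{1..n-L1}.
               bcoef c L1 n n * bcoef c L2 n (n - L1) * bcoef c (n - (L1 + L2)) n (n - (L1 + L2)))) X +
     (\<Sum>L1\<in>{1..n-1}. \<Sum>L2\<in>{1..n-L1}. \<Sum>L3\<in>{L3\<in>{1..n-(L1+L2)}. L1 + L2 + L3 \<noteq> n}.
               sc (complex_of_real (bcoef c L1 n n * bcoef c L2 n (n - L1) * bcoef c L3 n (n - (L1 + L2))))
                 (B (n - (L1 + L2 + L3)) (3 * n - (L1 + L2 + L3)) chi))"
      by (simp only: V.scale_sum_left sum.distrib of_real_sum)
    finally show ?thesis .
  qed
  have P2: "(\<Sum>L1\<in>{1..n-1}. \<Sum>L2\<in>{1..n-L1}.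
               bcoef c L1 n n * bcoef c L2 n (n - L1) * bcoef c (n - (L1 + L2)) n (n - (L1 + L2))) > 0"
  proof (rule sum_pos2)
    show "finite {1..n-1}" by simp
    show "1 \<in> {1..n-1}" using assms(6) by simp
    show "0 \<le> (\<Sum>L2\<in>{1..n-L1}. bcoef c L1 n n * bcoef c L2 n (n - L1) * bcoef c (n - (L1 + L2)) n (n - (L1 + L2)))" for L1
      using assms(1) by (intro sum_nonneg mult_nonneg_nonneg bcoef_nonneg)
    show "0 < (\<Sum>L2\<in>{1..n-1}. bcoef c 1 n n * bcoef c L2 n (n - 1) * bcoef c (n - (1 + L2)) n (n - (1 + L2)))"
    proof (rule sum_pos2)
      show "finite {1..n-1}" by simp
      show "1 \<in> {1..n-1}" using assms(6) by simp
      show "0 \<le> bcoef c 1 n n * bcoef c L2 n (n - 1) * bcoef c (n - (1 + L2)) n (n - (1 + L2))" for L2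
        using assms(1) by (intro mult_nonneg_nonneg bcoef_nonneg)
      show "0 < bcoef c 1 n n * bcoef c 1 n (n - 1) * bcoef c (n - (1 + 1)) n (n - (1 + 1))"
        using assms(1) assms(6) by (intro mult_pos_pos bcoef_pos) auto
    qed
  qed
  show ?thesis
    unfolding Let_def chi_def[symmetric]
  proof (intro conjI)
    show "br (B 0 n chi) (br (B 0 n chi) (br (B 0 n chi) (B n 0 chi))) =
     sc (complex_of_real (\<Sum>L1\<in>{1..n-1}. \<Sum>L2\<in>{1..n-L1}.
               bcoef c L1 n n * bcoef c L2 n (n - L1) * bcoef c (n - (L1 + L2)) n (n - (L1 + L2)))) (B 0 (2 * n) chi) +
     (\<Sum>L1\<in>{1..n-1}. \<Sum>L2\<in>{1..n-L1}. \<Sum>L3\<in>{L3\<in>{1..n-(L1+L2)}. L1 + L2 + L3 \<noteq> n}.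
               sc (complex_of_real (bcoef c L1 n n * bcoef c L2 n (n - L1) * bcoef c L3 n (n - (L1 + L2))))
                 (B (n - (L1 + L2 + L3)) (3 * n - (L1 + L2 + L3)) chi))"
      using P1 unfolding X_def .
    show "(\<Sum>L1\<in>{1..n-1}. \<Sum>L2\<in>{1..n-L1}.
               bcoef c L1 n n * bcoef c L2 n (n - L1) * bcoef c (n - (L1 + L2)) n (n - (L1 + L2))) \<noteq> 0"
      using P2 by simp
    show "st (\<Sum>L1\<in>{1..n-1}. \<Sum>L2\<in>{1..n-L1}. \<Sum>L3\<in>{L3\<in>{1..n-(L1+L2)}. L1 + L2 + L3 \<noteq> n}.
               sc (complex_of_real (bcoef c L1 n n * bcoef c L2 n (n - L1) * bcoef c L3 n (n - (L1 + L2))))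
                 (B (n - (L1 + L2 + L3)) (3 * n - (L1 + L2 + L3)) chi)) =
       (\<Sum>L1\<in>{1..n-1}. \<Sum>L2\<in>{1..n-L1}. \<Sum>L3\<in>{L3\<in>{1..n-(L1+L2)}. L1 + L2 + L3 \<noteq> n}.
               sc (complex_of_real (bcoef c L1 n n * bcoef c L2 n (n - L1) * bcoef c L3 n (n - (L1 + L2))))
                 (B (3 * n - (L1 + L2 + L3)) (n - (L1 + L2 + L3)) chi))"
      by (simp only: stsum stsc stBc)
  qed
qed

end
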